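(* Let $P,Q$ be finite posets, $R$ an indecomposable commutative unital ring, and $\Phi:I^3(P,R)\to I^3(Q,R)$ an $R$-linear algebra isomorphism. Then $\Phi(J^3_1(P,R))=J^3_1(Q,R)$, and there is a bijection $\varphi:P\to Q$ such that $\Phi(e_x)-e_{\varphi(x)}\in J^3_1(Q,R)$ for all $x\in P$ (equivalently, the induced isomorphism $I^3(P,R)/J^3_1(P,R)\to I^3(Q,R)/J^3_1(Q,R)$ maps $e_x+J^3_1(P,R)$ to $e_{\varphi(x)}+J^3_1(Q,R)$).
   Context: A commutative ring is indecomposable if its only idempotents are $0$ and $1$. For a finite poset $P$, $P^3_\le=\{(x,y,z)\in P^3: x\le y\le z\}$, and $I^3(P,R)$ is the $R$-module of functions $f:P^3_\le\to R$ with multiplication $(fg)(x_1,x_2,x_3)=\sum f(x_1,y_1,y_2)g(y_1,y_2,x_3)$ over all $x_1\le y_1\le x_2\le y_2\le x_3$. For $x\le y\le z$, $e_{xyz}$ is the function equal to $1$ at $(x,y,z)$ and $0$ elsewhere, and $e_x:=e_{xxx}$. $J^3_1(P,R)=\{f\in I^3(P,R): f(x,x,x)=0 \text{ for all } x\in P\}$, an ideal. *)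

theory Defs
  imports Main
begin

definition finite_poset :: "'a set \<Rightarrow> ('a \<Rightarrow> 'a \<Rightarrow> bool) \<Rightarrow> bool" where
  "finite_poset P le \<longleftrightarrow> finite P
     \<and> (\<forall>x\<in>P. le x x)
     \<and> (\<forall>x\<in>P. \<forall>y\<in>P. le x y \<and> le y x \<longrightarrow> x = y)
     \<and> (\<forall>x\<in>P. \<forall>y\<in>P. \<forall>z\<in>P. le x y \<and> le y z \<longrightarrow> le x z)"

definition indecomposable_ring :: "'r::comm_ring_1 itself \<Rightarrow> bool" where
  "indecomposable_ring _ \<longleftrightarrow> (\<forall>e::'r. e * e = e \<longrightarrow> e = 0 \<or> e = 1)"

definition P3le :: "'a set \<Rightarrow> ('a \<Rightarrow> 'a \<Rightarrow> bool) \<Rightarrow> ('a \<times> 'a \<times> 'a) set" where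
  "P3le P le = {(x, y, z). x \<in> P \<and> y \<in> P \<and> z \<in> P \<and> le x y \<and> le y z}"

text \<open>Elements of I^3(P,R): functions on P^3_le, represented as functions vanishing outside.\<close>
definition I3 :: "'a set \<Rightarrow> ('a \<Rightarrow> 'a \<Rightarrow> bool) \<Rightarrow> ('a \<times> 'a \<times> 'a \<Rightarrow> 'r::comm_ring_1) set" where
  "I3 P le = {f. \<forall>t. t \<notin> P3le P le \<longrightarrow> f t = 0}"

definition mult3 :: "'a set \<Rightarrow> ('a \<Rightarrow> 'a \<Rightarrow> bool) \<Rightarrow> ('a \<times> 'a \<times> 'a \<Rightarrow> 'r::comm_ring_1)
    \<Rightarrow> ('a \<times> 'a \<times> 'a \<Rightarrow> 'r) \<Rightarrow> ('a \<times> 'a \<times> 'a \<Rightarrow> 'r)" where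
  "mult3 P le f g = (\<lambda>(x1, x2, x3).
     if (x1, x2, x3) \<in> P3le P le then
       (\<Sum>(y1, y2)\<in>{(y1, y2). y1 \<in> P \<and> y2 \<in> P \<and> le x1 y1 \<and> le y1 x2 \<and> le x2 y2 \<and> le y2 x3}.
          f (x1, y1, y2) * g (y1, y2, x3))
     else 0)"

definition J31 :: "'a set \<Rightarrow> ('a \<Rightarrow> 'a \<Rightarrow> bool) \<Rightarrow> ('a \<times> 'a \<times> 'a \<Rightarrow> 'r::comm_ring_1) set" where
  "J31 P le = {f \<in> I3 P le. \<forall>x\<in>P. f (x, x, x) = 0}"

definition e3 :: "'a \<Rightarrow> 'a \<Rightarrow> 'a \<Rightarrow> ('a \<times> 'a \<times> 'a \<Rightarrow> 'r::comm_ring_1)" where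
  "e3 x y z = (\<lambda>t. if t = (x, y, z) then 1 else 0)"

definition e1 :: "'a \<Rightarrow> ('a \<times> 'a \<times> 'a \<Rightarrow> 'r::comm_ring_1)" where
  "e1 x = e3 x x x"

definition alg_iso3 :: "'a set \<Rightarrow> ('a \<Rightarrow> 'a \<Rightarrow> bool) \<Rightarrow> 'b set \<Rightarrow> ('b \<Rightarrow> 'b \<Rightarrow> bool)
    \<Rightarrow> (('a \<times> 'a \<times> 'a \<Rightarrow> 'r::comm_ring_1) \<Rightarrow> ('b \<times> 'b \<times> 'b \<Rightarrow> 'r)) \<Rightarrow> bool" where
  "alg_iso3 P leP Q leQ \<Phi> \<longleftrightarrow>
     bij_betw \<Phi> (I3 P leP) (I3 Q leQ)
     \<and> (\<forall>f\<in>I3 P leP. \<forall>g\<in>I3 P leP. \<Phi> (\<lambda>t. f t + g t) = (\<lambda>t. \<Phi> f t + \<Phi> g t))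
     \<and> (\<forall>c. \<forall>f\<in>I3 P leP. \<Phi> (\<lambda>t. c * f t) = (\<lambda>t. c * \<Phi> f t))
     \<and> (\<forall>f\<in>I3 P leP. \<forall>g\<in>I3 P leP. \<Phi> (mult3 P leP f g) = mult3 Q leQ (\<Phi> f) (\<Phi> g))"

end

theory Submission imports Defs begin

definition et :: "'a \<times> 'a \<times> 'a \<Rightarrow> 'a \<times> 'a \<times> 'a \<Rightarrow> 'r::comm_ring_1" where
  "et t = (\<lambda>s. if s = t then 1 else 0)"

lemma e1_et: "e1 x = et (x,x,x)"
  by (simp add: e1_def e3_def et_def)

lemma finite_P3le: "finite P \<Longrightarrow> finite (P3le P le)"
proof -
  assume "finite P"
  moreover have "P3le P le \<subseteq> P \<times> P \<times> P" by (auto simp: P3le_def)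
  ultimately show ?thesis by (meson finite_SigmaI finite_subset)
qed

lemma et_I3: "t \<in> P3le P le \<Longrightarrow> et t \<in> I3 P le"
  by (auto simp: et_def I3_def)

lemma zero_I3: "(\<lambda>_. 0) \<in> I3 P le"
  by (auto simp: I3_def)

lemma add_I3: "f \<in> I3 P le \<Longrightarrow> g \<in> I3 P le \<Longrightarrow> (\<lambda>t. f t + g t) \<in> I3 P le"
  by (auto simp: I3_def)

lemma diff_I3: "f \<in> I3 P le \<Longrightarrow> g \<in> I3 P le \<Longrightarrow> (\<lambda>t. f t - g t) \<in> I3 P le"
  by (auto simp: I3_def)

lemma smult_I3: "f \<in> I3 P le \<Longrightarrow> (\<lambda>t. c * f t) \<in> I3 P le"
  by (auto simp: I3_def)

lemma mult_I3: "mult3 P le f g \<in> I3 P le"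
  by (auto simp: I3_def mult3_def)

lemma sum_I3: "finite T \<Longrightarrow> (\<forall>t\<in>T. g t \<in> I3 P le) \<Longrightarrow> (\<lambda>s. \<Sum>t\<in>T. g t s) \<in> I3 P le"
  by (induction T rule: finite_induct) (auto simp: I3_def)

lemma mult_et:
  assumes "finite P"
  shows "mult3 P le (et (a,b,c)) g (x1,x2,x3) =
    (if (x1,x2,x3) \<in> P3le P le \<and> x1 = a \<and> b \<in> P \<and> c \<in> P \<and> le a b \<and> le b x2 \<and> le x2 c \<and> le c x3
     then g (b,c,x3) else 0)"
proof -
  define S where "S = {(y1, y2). y1 \<in> P \<and> y2 \<in> P \<and> le x1 y1 \<and> le y1 x2 \<and> le x2 y2 \<and> le y2 x3}"
  have fS: "finite S"
  proof -
    have "S \<subseteq> P \<times> P" by (auto simp: S_def)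
    thus ?thesis using assms by (meson finite_SigmaI finite_subset)
  qed
  have "(\<Sum>(y1, y2)\<in>S. et (a,b,c) (x1, y1, y2) * g (y1, y2, x3))
      = (\<Sum>p\<in>S. if p = (b,c) then (if x1 = a then g (b,c,x3) else 0) else 0)"
    by (rule sum.cong) (auto simp: et_def split: if_splits)
  also have "\<dots> = (if (b,c) \<in> S then (if x1 = a then g (b,c,x3) else 0) else 0)"
    using fS by (simp add: sum.delta)
  finally have "(\<Sum>(y1, y2)\<in>S. et (a,b,c) (x1, y1, y2) * g (y1, y2, x3))
      = (if (b,c) \<in> S then (if x1 = a then g (b,c,x3) else 0) else 0)" .
  thus ?thesis unfolding mult3_def S_def[symmetric] by (auto simp: S_def)
qed

lemma decomp:
  assumes "finite P" "f \<in> I3 P le"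
  shows "f = (\<lambda>s. \<Sum>t\<in>P3le P le. f t * et t s)"
proof
  fix s
  have "(\<Sum>t\<in>P3le P le. f t * et t s) = (\<Sum>t\<in>P3le P le. if s = t then f s else 0)"
    by (rule sum.cong) (auto simp: et_def)
  also have "\<dots> = (if s \<in> P3le P le then f s else 0)"
    using finite_P3le[OF assms(1)] by (simp add: sum.delta)
  also have "\<dots> = f s" using assms(2) unfolding I3_def by (simp del: split_paired_All)
  finally show "f s = (\<Sum>t\<in>P3le P le. f t * et t s)" by simp
qed

lemma chi_sum:
  assumes add: "\<forall>f\<in>I3 P le. \<forall>g\<in>I3 P le. \<chi> (\<lambda>t. f t + g t) = \<chi> f + \<chi> g"
    and z: "\<chi> (\<lambda>_. 0) = (0::'r::comm_ring_1)"
  shows "finite T \<Longrightarrow> (\<forall>t\<in>T. g t \<in> I3 P le) \<Longrightarrow> \<chi> (\<lambda>s. \<Sum>t\<in>T. g t s) = (\<Sum>t\<in>T. \<chi> (g t))"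
proof (induction T rule: finite_induct)
  case empty
  then show ?case using z by simp
next
  case (insert x F)
  have "(\<lambda>s. \<Sum>t\<in>insert x F. g t s) = (\<lambda>s. g x s + (\<Sum>t\<in>F. g t s))"
    using insert by simp
  moreover have "(\<lambda>s. \<Sum>t\<in>F. g t s) \<in> I3 P le" using insert sum_I3 by blast
  ultimately show ?case using insert add by simp
qed

lemma hom_class:
  fixes \<chi> :: "('a \<times> 'a \<times> 'a \<Rightarrow> 'r::comm_ring_1) \<Rightarrow> 'r"
  assumes fp: "finite_poset P le"
    and add: "\<forall>f\<in>I3 P le. \<forall>g\<in>I3 P le. \<chi> (\<lambda>t. f t + g t) = \<chi> f + \<chi> g"
    and hom: "\<forall>c. \<forall>f\<in>I3 P le. \<chi> (\<lambda>t. c * f t) = c * \<chi> f"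
    and mul: "\<forall>f\<in>I3 P le. \<forall>g\<in>I3 P le. \<chi> (mult3 P le f g) = \<chi> f * \<chi> g"
  shows "\<forall>f\<in>I3 P le. \<chi> f = (\<Sum>x\<in>P. f (x,x,x) * \<chi> (et (x,x,x)))"
    and "\<forall>x\<in>P. \<chi> (et (x,x,x)) * \<chi> (et (x,x,x)) = \<chi> (et (x,x,x))"
    and "\<forall>x\<in>P. \<forall>y\<in>P. x \<noteq> y \<longrightarrow> \<chi> (et (x,x,x)) * \<chi> (et (y,y,y)) = 0"
proof -
  have finP: "finite P" using fp unfolding finite_poset_def by blast
  have refl: "\<And>x. x \<in> P \<Longrightarrow> le x x" using fp unfolding finite_poset_def by blast
  have antis: "\<And>x y. x \<in> P \<Longrightarrow> y \<in> P \<Longrightarrow> le x y \<Longrightarrow> le y x \<Longrightarrow> x = y"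
    using fp unfolding finite_poset_def by blast
  have z: "\<chi> (\<lambda>_. 0) = 0"
  proof -
    have "\<chi> (\<lambda>t. 0 * (\<lambda>_. 0) t) = 0 * \<chi> (\<lambda>_. 0)" by (rule hom[rule_format, OF zero_I3])
    thus ?thesis by simp
  qed
  have memP: "\<And>a b c. (a,b,c) \<in> P3le P le \<Longrightarrow> a \<in> P \<and> b \<in> P \<and> c \<in> P \<and> le a b \<and> le b c"
    by (auto simp: P3le_def)
  have ET: "\<And>t. t \<in> P3le P le \<Longrightarrow> et t \<in> I3 P le" by (rule et_I3)
  have mulE: "\<chi> (mult3 P le (et s) (et t)) = \<chi> (et s) * \<chi> (et t)"
    if "s \<in> P3le P le" "t \<in> P3le P le" for s t
    by (rule mul[rule_format, OF ET[OF that(1)] ET[OF that(2)]])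
  have xP3: "(x,x,x) \<in> P3le P le" if "x \<in> P" for x using that refl by (simp add: P3le_def)
  have m_id: "mult3 P le (et (x,x,x)) (et (x,x,x)) = et (x,x,x)" if "x \<in> P" for x
  proof (rule ext)
    fix s :: "'a \<times> 'a \<times> 'a"
    obtain x1 x2 x3 where s: "s = (x1,x2,x3)" by (cases s) auto
    show "mult3 P le (et (x,x,x)) (et (x,x,x)) s = et (x,x,x) s"
      unfolding s mult_et[OF finP] using that refl antis
      by (auto simp: et_def P3le_def)
  qed
  have m_orth: "mult3 P le (et (x,x,x)) (et (y,y,y)) = (\<lambda>_. 0)" if "x \<in> P" "y \<in> P" "x \<noteq> y" for x y
  proof (rule ext)
    fix s :: "'a \<times> 'a \<times> 'a"
    obtain x1 x2 x3 where s: "s = (x1,x2,x3)" by (cases s) auto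
    show "mult3 P le (et (x,x,x)) (et (y,y,y)) s = 0"
      unfolding s mult_et[OF finP] using that by (auto simp: et_def)
  qed
  have c_idem: "\<chi> (et (x,x,x)) * \<chi> (et (x,x,x)) = \<chi> (et (x,x,x))" if "x \<in> P" for x
    by (metis mulE[OF xP3[OF that] xP3[OF that]] m_id[OF that])
  have c_orth: "\<chi> (et (x,x,x)) * \<chi> (et (y,y,y)) = 0" if "x \<in> P" "y \<in> P" "x \<noteq> y" for x y
    using mulE[OF xP3[OF that(1)] xP3[OF that(2)]] by (simp add: m_orth[OF that] z)
  have nd1: "\<chi> (et (a,a,c)) = 0" if "(a,a,c) \<in> P3le P le" "a \<noteq> c" for a c
  proof -
    have aP: "a \<in> P" "c \<in> P" "le a c" using memP[OF that(1)] by auto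
    have e1: "mult3 P le (et (a,a,a)) (et (a,a,c)) = et (a,a,c)"
    proof (rule ext)
      fix s :: "'a \<times> 'a \<times> 'a"
      obtain x1 x2 x3 where s: "s = (x1,x2,x3)" by (cases s) auto
      show "mult3 P le (et (a,a,a)) (et (a,a,c)) s = et (a,a,c) s"
        unfolding s mult_et[OF finP] using aP refl antis
        by (auto simp: et_def P3le_def)
    qed
    have e2: "mult3 P le (et (a,a,c)) (et (a,a,a)) = (\<lambda>_. 0)"
    proof (rule ext)
      fix s :: "'a \<times> 'a \<times> 'a"
      obtain x1 x2 x3 where s: "s = (x1,x2,x3)" by (cases s) auto
      show "mult3 P le (et (a,a,c)) (et (a,a,a)) s = 0"
        unfolding s mult_et[OF finP] using that by (auto simp: et_def)
    qed
    have "\<chi> (et (a,a,c)) = \<chi> (et (a,a,a)) * \<chi> (et (a,a,c))"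
      by (metis mulE[OF xP3[OF aP(1)] that(1)] e1)
    moreover have "\<chi> (et (a,a,c)) * \<chi> (et (a,a,a)) = 0"
      using mulE[OF that(1) xP3[OF aP(1)]] by (simp add: e2 z)
    ultimately show ?thesis by (simp add: mult.commute)
  qed
  have nd2: "\<chi> (et (a,b,b)) = 0" if "(a,b,b) \<in> P3le P le" "a \<noteq> b" for a b
  proof -
    have aP: "a \<in> P" "b \<in> P" "le a b" using memP[OF that(1)] by auto
    have e1: "mult3 P le (et (a,b,b)) (et (b,b,b)) = et (a,b,b)"
    proof (rule ext)
      fix s :: "'a \<times> 'a \<times> 'a"
      obtain x1 x2 x3 where s: "s = (x1,x2,x3)" by (cases s) auto
      show "mult3 P le (et (a,b,b)) (et (b,b,b)) s = et (a,b,b) s"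
        unfolding s mult_et[OF finP] using aP refl antis
        by (auto simp: et_def P3le_def)
    qed
    have e2: "mult3 P le (et (b,b,b)) (et (a,b,b)) = (\<lambda>_. 0)"
    proof (rule ext)
      fix s :: "'a \<times> 'a \<times> 'a"
      obtain x1 x2 x3 where s: "s = (x1,x2,x3)" by (cases s) auto
      show "mult3 P le (et (b,b,b)) (et (a,b,b)) s = 0"
        unfolding s mult_et[OF finP] using that by (auto simp: et_def)
    qed
    have "\<chi> (et (a,b,b)) = \<chi> (et (a,b,b)) * \<chi> (et (b,b,b))"
      by (metis mulE[OF that(1) xP3[OF aP(2)]] e1)
    moreover have "\<chi> (et (b,b,b)) * \<chi> (et (a,b,b)) = 0"
      using mulE[OF xP3[OF aP(2)] that(1)] by (simp add: e2 z)
    ultimately show ?thesis by (simp add: mult.commute)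
  qed
  have nd: "\<chi> (et (a,b,c)) = 0" if "(a,b,c) \<in> P3le P le" "\<not> (a = b \<and> b = c)" for a b c
  proof (cases "a = b")
    case True
    then show ?thesis using nd1 that by auto
  next
    case False
    show ?thesis
    proof (cases "b = c")
      case True
      then show ?thesis using nd2 that False by auto
    next
      case bc: False
      have aP: "a \<in> P" "b \<in> P" "c \<in> P" "le a b" "le b c" using memP[OF that(1)] by auto
      have abb: "(a,b,b) \<in> P3le P le" and bbc: "(b,b,c) \<in> P3le P le"
        using aP refl by (auto simp: P3le_def)
      have e1: "mult3 P le (et (a,b,b)) (et (b,b,c)) = et (a,b,c)"
      proof (rule ext)
        fix s :: "'a \<times> 'a \<times> 'a"
        obtain x1 x2 x3 where s: "s = (x1,x2,x3)" by (cases s) auto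
        show "mult3 P le (et (a,b,b)) (et (b,b,c)) s = et (a,b,c) s"
          unfolding s mult_et[OF finP] using aP refl antis
          by (auto simp: et_def P3le_def)
      qed
      have "\<chi> (et (a,b,c)) = \<chi> (et (a,b,b)) * \<chi> (et (b,b,c))"
        by (metis mulE[OF abb bbc] e1)
      then show ?thesis using nd2[OF abb False] by simp
    qed
  qed
  show "\<forall>f\<in>I3 P le. \<chi> f = (\<Sum>x\<in>P. f (x,x,x) * \<chi> (et (x,x,x)))"
  proof
    fix f :: "'a \<times> 'a \<times> 'a \<Rightarrow> 'r" assume f: "f \<in> I3 P le"
    have "\<chi> f = \<chi> (\<lambda>s. \<Sum>t\<in>P3le P le. f t * et t s)"
      by (rule arg_cong[OF decomp[OF finP f]])
    also have "\<dots> = (\<Sum>t\<in>P3le P le. \<chi> (\<lambda>s. f t * et t s))"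
      by (rule chi_sum[OF add z]) (auto intro: smult_I3 ET simp: finite_P3le[OF finP])
    also have "\<dots> = (\<Sum>t\<in>P3le P le. f t * \<chi> (et t))"
      by (rule sum.cong[OF HOL.refl], rule hom[rule_format, OF ET])
    also have "\<dots> = (\<Sum>t\<in>(\<lambda>x. (x,x,x)) ` P. f t * \<chi> (et t))"
    proof (rule sum.mono_neutral_right[OF finite_P3le[OF finP]])
      show "(\<lambda>x. (x,x,x)) ` P \<subseteq> P3le P le" using xP3 by auto
      show "\<forall>t\<in>P3le P le - (\<lambda>x. (x, x, x)) ` P. f t * \<chi> (et t) = 0"
      proof
        fix t assume t: "t \<in> P3le P le - (\<lambda>x. (x, x, x)) ` P"
        obtain a b c where abc: "t = (a,b,c)" by (cases t) auto
        have "\<not> (a = b \<and> b = c)" using t abc memP by auto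
        thus "f t * \<chi> (et t) = 0" using nd t abc by auto
      qed
    qed
    also have "\<dots> = (\<Sum>x\<in>P. f (x,x,x) * \<chi> (et (x,x,x)))"
      by (subst sum.reindex) (auto simp: inj_on_def)
    finally show "\<chi> f = (\<Sum>x\<in>P. f (x,x,x) * \<chi> (et (x,x,x)))" .
  qed
  show "\<forall>x\<in>P. \<chi> (et (x,x,x)) * \<chi> (et (x,x,x)) = \<chi> (et (x,x,x))" using c_idem by auto
  show "\<forall>x\<in>P. \<forall>y\<in>P. x \<noteq> y \<longrightarrow> \<chi> (et (x,x,x)) * \<chi> (et (y,y,y)) = 0" using c_orth by auto
qed


lemma hom_eval:
  fixes \<chi> :: "('a \<times> 'a \<times> 'a \<Rightarrow> 'r::comm_ring_1) \<Rightarrow> 'r"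
  assumes fp: "finite_poset P le"
    and ind: "indecomposable_ring TYPE('r)"
    and add: "\<forall>f\<in>I3 P le. \<forall>g\<in>I3 P le. \<chi> (\<lambda>t. f t + g t) = \<chi> f + \<chi> g"
    and hom: "\<forall>c. \<forall>f\<in>I3 P le. \<chi> (\<lambda>t. c * f t) = c * \<chi> f"
    and mul: "\<forall>f\<in>I3 P le. \<forall>g\<in>I3 P le. \<chi> (mult3 P le f g) = \<chi> f * \<chi> g"
    and nz: "\<exists>f\<in>I3 P le. \<chi> f \<noteq> 0"
  shows "\<exists>x\<in>P. \<forall>f\<in>I3 P le. \<chi> f = f (x,x,x)"
proof -
  note H = hom_class[OF fp add hom mul]
  have finP: "finite P" using fp unfolding finite_poset_def by blast
  have c01: "\<chi> (et (x,x,x)) = 0 \<or> \<chi> (et (x,x,x)) = 1" if "x \<in> P" for x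
    using H(2) that ind unfolding indecomposable_ring_def by blast
  obtain x0 where x0: "x0 \<in> P" "\<chi> (et (x0,x0,x0)) \<noteq> 0"
  proof -
    { assume "\<forall>x\<in>P. \<chi> (et (x,x,x)) = 0"
      hence "\<forall>f\<in>I3 P le. \<chi> f = 0" using H(1) by simp
      hence False using nz by blast }
    thus ?thesis using that by blast
  qed
  have c1: "\<chi> (et (x0,x0,x0)) = 1" using c01 x0 by blast
  have c0: "\<chi> (et (y,y,y)) = 0" if "y \<in> P" "y \<noteq> x0" for y
  proof -
    have "\<chi> (et (x0,x0,x0)) * \<chi> (et (y,y,y)) = 0"
      using H(3)[rule_format, OF x0(1) that(1)] that(2) by auto
    thus ?thesis using c1 by simp
  qed
  show ?thesis
  proof (intro bexI[OF _ x0(1)] ballI)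
    fix f :: "'a \<times> 'a \<times> 'a \<Rightarrow> 'r" assume f: "f \<in> I3 P le"
    have "\<chi> f = (\<Sum>x\<in>P. f (x,x,x) * \<chi> (et (x,x,x)))" using H(1) f by blast
    also have "\<dots> = (\<Sum>x\<in>P. if x = x0 then f (x0,x0,x0) else 0)"
      by (rule sum.cong[OF HOL.refl]) (auto simp: c1 c0)
    also have "\<dots> = f (x0,x0,x0)"
      using x0(1) finP by (simp add: sum.delta)
    finally show "\<chi> f = f (x0,x0,x0)" .
  qed
qed

lemma mult_diag:
  assumes fp: "finite_poset Q le" and y: "y \<in> Q"
  shows "mult3 Q le F G (y,y,y) = F (y,y,y) * (G (y,y,y) :: 'r::comm_ring_1)"
proof -
  have refl: "le y y" using fp y unfolding finite_poset_def by blast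
  have antis: "\<And>x y. x \<in> Q \<Longrightarrow> y \<in> Q \<Longrightarrow> le x y \<Longrightarrow> le y x \<Longrightarrow> x = y"
    using fp unfolding finite_poset_def by blast
  have S: "{(y1, y2). y1 \<in> Q \<and> y2 \<in> Q \<and> le y y1 \<and> le y1 y \<and> le y y2 \<and> le y2 y} = {(y,y)}"
  proof (intro equalityI subsetI)
    fix p assume "p \<in> {(y1, y2). y1 \<in> Q \<and> y2 \<in> Q \<and> le y y1 \<and> le y1 y \<and> le y y2 \<and> le y2 y}"
    then obtain a b where p: "p = (a,b)" "a \<in> Q" "b \<in> Q" "le y a" "le a y" "le y b" "le b y" by blast
    have "a = y" "b = y" using antis[OF p(2) y p(5) p(4)] antis[OF p(3) y p(7) p(6)] by auto
    thus "p \<in> {(y,y)}" using p(1) by simp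
  next
    fix p assume "p \<in> {(y,y)}"
    thus "p \<in> {(y1, y2). y1 \<in> Q \<and> y2 \<in> Q \<and> le y y1 \<and> le y1 y \<and> le y y2 \<and> le y2 y}"
      using y refl by simp
  qed
  have "(y,y,y) \<in> P3le Q le" using y refl by (simp add: P3le_def)
  thus ?thesis unfolding mult3_def by (simp add: S)
qed

lemma iso_parts:
  assumes iso: "alg_iso3 P leP Q leQ \<Phi>"
  shows "bij_betw \<Phi> (I3 P leP) (I3 Q leQ)"
   and "\<forall>f\<in>I3 P leP. \<forall>g\<in>I3 P leP. \<Phi> (\<lambda>t. f t + g t) = (\<lambda>t. \<Phi> f t + \<Phi> g t)"
   and "\<forall>c. \<forall>f\<in>I3 P leP. \<Phi> (\<lambda>t. c * f t) = (\<lambda>t. c * \<Phi> f t)"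
   and "\<forall>f\<in>I3 P leP. \<forall>g\<in>I3 P leP. \<Phi> (mult3 P leP f g) = mult3 Q leQ (\<Phi> f) (\<Phi> g)"
proof -
  note X = iso[unfolded alg_iso3_def]
  show "bij_betw \<Phi> (I3 P leP) (I3 Q leQ)" by (rule conjunct1[OF X])
  show "\<forall>f\<in>I3 P leP. \<forall>g\<in>I3 P leP. \<Phi> (\<lambda>t. f t + g t) = (\<lambda>t. \<Phi> f t + \<Phi> g t)"
    by (rule conjunct1[OF conjunct2[OF X]])
  show "\<forall>c. \<forall>f\<in>I3 P leP. \<Phi> (\<lambda>t. c * f t) = (\<lambda>t. c * \<Phi> f t)"
    by (rule conjunct1[OF conjunct2[OF conjunct2[OF X]]])
  show "\<forall>f\<in>I3 P leP. \<forall>g\<in>I3 P leP. \<Phi> (mult3 P leP f g) = mult3 Q leQ (\<Phi> f) (\<Phi> g)"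
    by (rule conjunct2[OF conjunct2[OF conjunct2[OF X]]])
qed

lemma inv_iso:
  assumes iso: "alg_iso3 P leP Q leQ \<Phi>"
  shows "alg_iso3 Q leQ P leP (inv_into (I3 P leP) \<Phi>)"
proof -
  note bij = iso_parts(1)[OF iso] and add = iso_parts(2)[OF iso]
    and hom = iso_parts(3)[OF iso] and mul = iso_parts(4)[OF iso]
  define \<Psi> where "\<Psi> = inv_into (I3 P leP) \<Phi>"
  have bij2: "bij_betw \<Psi> (I3 Q leQ) (I3 P leP)" unfolding \<Psi>_def by (rule bij_betw_inv_into[OF bij])
  have inj: "inj_on \<Phi> (I3 P leP)" by (rule bij_betw_imp_inj_on[OF bij])
  have PsiI: "\<And>g. g \<in> I3 Q leQ \<Longrightarrow> \<Psi> g \<in> I3 P leP" by (rule bij_betw_apply[OF bij2])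
  have PhiPsi: "\<And>g. g \<in> I3 Q leQ \<Longrightarrow> \<Phi> (\<Psi> g) = g" unfolding \<Psi>_def
    by (rule bij_betw_inv_into_right[OF bij])
  have PsiPhi: "\<And>f. f \<in> I3 P leP \<Longrightarrow> \<Psi> (\<Phi> f) = f" unfolding \<Psi>_def
    by (rule inv_into_f_f[OF inj])
  have A: "\<Psi> (\<lambda>t. f t + g t) = (\<lambda>t. \<Psi> f t + \<Psi> g t)" if "f \<in> I3 Q leQ" "g \<in> I3 Q leQ" for f g
  proof -
    have "\<Phi> (\<lambda>t. \<Psi> f t + \<Psi> g t) = (\<lambda>t. f t + g t)"
      using add[rule_format, OF PsiI[OF that(1)] PsiI[OF that(2)]] PhiPsi[OF that(1)] PhiPsi[OF that(2)] by simp
    hence "\<Psi> (\<lambda>t. f t + g t) = \<Psi> (\<Phi> (\<lambda>t. \<Psi> f t + \<Psi> g t))" by simp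
    thus ?thesis using PsiPhi[OF add_I3[OF PsiI[OF that(1)] PsiI[OF that(2)]]] by simp
  qed
  have B: "\<Psi> (\<lambda>t. c * f t) = (\<lambda>t. c * \<Psi> f t)" if "f \<in> I3 Q leQ" for f c
  proof -
    have "\<Phi> (\<lambda>t. c * \<Psi> f t) = (\<lambda>t. c * f t)"
      using hom[rule_format, OF PsiI[OF that]] PhiPsi[OF that] by simp
    hence "\<Psi> (\<lambda>t. c * f t) = \<Psi> (\<Phi> (\<lambda>t. c * \<Psi> f t))" by simp
    thus ?thesis using PsiPhi[OF smult_I3[OF PsiI[OF that]]] by simp
  qed
  have C: "\<Psi> (mult3 Q leQ f g) = mult3 P leP (\<Psi> f) (\<Psi> g)" if "f \<in> I3 Q leQ" "g \<in> I3 Q leQ" for f g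
  proof -
    have "\<Phi> (mult3 P leP (\<Psi> f) (\<Psi> g)) = mult3 Q leQ f g"
      using mul[rule_format, OF PsiI[OF that(1)] PsiI[OF that(2)]] PhiPsi[OF that(1)] PhiPsi[OF that(2)] by simp
    hence "\<Psi> (mult3 Q leQ f g) = \<Psi> (\<Phi> (mult3 P leP (\<Psi> f) (\<Psi> g)))" by simp
    thus ?thesis using PsiPhi[OF mult_I3] by simp
  qed
  show ?thesis unfolding alg_iso3_def \<Psi>_def[symmetric]
    by (intro conjI bij2 ballI allI A B C)
qed

lemma main:
  fixes \<Phi> :: "('a \<times> 'a \<times> 'a \<Rightarrow> 'r::comm_ring_1) \<Rightarrow> ('b \<times> 'b \<times> 'b \<Rightarrow> 'r)"
  assumes fP: "finite_poset P leP" and fQ: "finite_poset Q leQ"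
    and ind: "indecomposable_ring TYPE('r)"
    and iso: "alg_iso3 P leP Q leQ \<Phi>"
  shows "\<exists>\<psi>. (\<forall>y\<in>Q. \<psi> y \<in> P) \<and> inj_on \<psi> Q \<and>
           (\<forall>y\<in>Q. \<forall>f\<in>I3 P leP. \<Phi> f (y,y,y) = f (\<psi> y, \<psi> y, \<psi> y))"
proof -
  note bij = iso_parts(1)[OF iso] and add = iso_parts(2)[OF iso]
    and hom = iso_parts(3)[OF iso] and mul = iso_parts(4)[OF iso]
  have reflQ: "\<And>y. y \<in> Q \<Longrightarrow> leQ y y" using fQ unfolding finite_poset_def by blast
  have pre: "\<exists>f\<in>I3 P leP. \<Phi> f = et (y,y,y)" if "y \<in> Q" for y
  proof -
    have "(et (y,y,y) :: 'b \<times> 'b \<times> 'b \<Rightarrow> 'r) \<in> I3 Q leQ" using et_I3 reflQ that by (simp add: P3le_def et_I3)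
    moreover have "I3 Q leQ = \<Phi> ` I3 P leP" using bij_betw_imp_surj_on[OF bij] by simp
    ultimately show ?thesis by (metis imageE)
  qed
  have ex: "\<exists>x\<in>P. \<forall>f\<in>I3 P leP. \<Phi> f (y,y,y) = f (x,x,x)" if y: "y \<in> Q" for y
  proof (rule hom_eval[OF fP ind, of "\<lambda>f. \<Phi> f (y,y,y)"])
    show "\<forall>f\<in>I3 P leP. \<forall>g\<in>I3 P leP. \<Phi> (\<lambda>t. f t + g t) (y,y,y) = \<Phi> f (y,y,y) + \<Phi> g (y,y,y)"
      using add by simp
    show "\<forall>c. \<forall>f\<in>I3 P leP. \<Phi> (\<lambda>t. c * f t) (y,y,y) = c * \<Phi> f (y,y,y)"
      using hom by simp
    show "\<forall>f\<in>I3 P leP. \<forall>g\<in>I3 P leP. \<Phi> (mult3 P leP f g) (y,y,y) = \<Phi> f (y,y,y) * \<Phi> g (y,y,y)"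
      using mul by (simp add: mult_diag[OF fQ y])
    show "\<exists>f\<in>I3 P leP. \<Phi> f (y,y,y) \<noteq> 0"
      using pre[OF y] by (force simp: et_def)
  qed
  hence "\<forall>y\<in>Q. \<exists>x. x \<in> P \<and> (\<forall>f\<in>I3 P leP. \<Phi> f (y,y,y) = f (x,x,x))" by blast
  from bchoice[OF this] obtain \<psi> where psi: "\<forall>y\<in>Q. \<psi> y \<in> P \<and> (\<forall>f\<in>I3 P leP. \<Phi> f (y,y,y) = f (\<psi> y, \<psi> y, \<psi> y))"
    by blast
  have "inj_on \<psi> Q"
  proof (rule inj_onI)
    fix y1 y2 assume y: "y1 \<in> Q" "y2 \<in> Q" "\<psi> y1 = \<psi> y2"
    obtain f where f: "f \<in> I3 P leP" "\<Phi> f = et (y1,y1,y1)" using pre[OF y(1)] by blast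
    have "\<Phi> f (y2,y2,y2) = f (\<psi> y2, \<psi> y2, \<psi> y2)" using psi y(2) f(1) by blast
    also have "\<dots> = f (\<psi> y1, \<psi> y1, \<psi> y1)" using y(3) by simp
    also have "\<dots> = \<Phi> f (y1,y1,y1)" using psi y(1) f(1) by simp
    finally have "\<Phi> f (y2,y2,y2) = \<Phi> f (y1,y1,y1)" .
    thus "y1 = y2" using f(2) by (auto simp: et_def split: if_splits)
  qed
  thus ?thesis using psi by blast
qed


theorem corollary3p2:
  fixes P :: "'a set" and leP :: "'a \<Rightarrow> 'a \<Rightarrow> bool"
    and Q :: "'b set" and leQ :: "'b \<Rightarrow> 'b \<Rightarrow> bool"
    and \<Phi> :: "('a \<times> 'a \<times> 'a \<Rightarrow> 'r::comm_ring_1) \<Rightarrow> ('b \<times> 'b \<times> 'b \<Rightarrow> 'r)"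
  assumes "finite_poset P leP" and "finite_poset Q leQ"
    and "indecomposable_ring TYPE('r)"
    and "alg_iso3 P leP Q leQ \<Phi>"
  shows "\<Phi> ` J31 P leP = J31 Q leQ
    \<and> (\<exists>\<phi>. bij_betw \<phi> P Q \<and>
          (\<forall>x\<in>P. (\<lambda>t. \<Phi> (e1 x) t - e1 (\<phi> x) t) \<in> J31 Q leQ))"
proof -
  note fP = assms(1) and fQ = assms(2) and ind = assms(3) and iso = assms(4)
  note bij = iso_parts(1)[OF iso]
  have finP: "finite P" using fP unfolding finite_poset_def by blast
  have finQ: "finite Q" using fQ unfolding finite_poset_def by blast
  have reflP: "\<And>x. x \<in> P \<Longrightarrow> leP x x" using fP unfolding finite_poset_def by blast
  have reflQ: "\<And>x. x \<in> Q \<Longrightarrow> leQ x x" using fQ unfolding finite_poset_def by blast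
  obtain \<psi> where psiP: "\<forall>y\<in>Q. \<psi> y \<in> P" and injpsi: "inj_on \<psi> Q"
    and psi: "\<forall>y\<in>Q. \<forall>f\<in>I3 P leP. \<Phi> f (y,y,y) = f (\<psi> y, \<psi> y, \<psi> y)"
    using main[OF fP fQ ind iso] by blast
  obtain \<psi>' where psiP': "\<forall>x\<in>P. \<psi>' x \<in> Q" and injpsi': "inj_on \<psi>' P"
    using main[OF fQ fP ind inv_iso[OF iso]] by blast
  have s1: "\<psi> ` Q \<subseteq> P" using psiP by blast
  have s2: "\<psi>' ` P \<subseteq> Q" using psiP' by blast
  have c1: "card Q \<le> card P" by (rule card_inj_on_le[OF injpsi s1 finP])
  have c2: "card P \<le> card Q" by (rule card_inj_on_le[OF injpsi' s2 finQ])
  have img: "\<psi> ` Q = P"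
  proof (rule card_subset_eq[OF finP])
    show "\<psi> ` Q \<subseteq> P" by (rule s1)
    show "card (\<psi> ` Q) = card P" using card_image[OF injpsi] c1 c2 by simp
  qed
  have bpsi: "bij_betw \<psi> Q P" unfolding bij_betw_def using injpsi img by (rule conjI)
  define \<phi> where "\<phi> = inv_into Q \<psi>"
  have bphi: "bij_betw \<phi> P Q" unfolding \<phi>_def by (rule bij_betw_inv_into[OF bpsi])
  have phiQ: "\<And>x. x \<in> P \<Longrightarrow> \<phi> x \<in> Q" by (rule bij_betw_apply[OF bphi])
  have psiphi: "\<And>x. x \<in> P \<Longrightarrow> \<psi> (\<phi> x) = x" unfolding \<phi>_def
    by (rule bij_betw_inv_into_right[OF bpsi])
  have phipsi: "\<And>y. y \<in> Q \<Longrightarrow> \<phi> (\<psi> y) = y" unfolding \<phi>_def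
    by (rule inv_into_f_f[OF injpsi])
  have PhiI: "\<And>f. f \<in> I3 P leP \<Longrightarrow> \<Phi> f \<in> I3 Q leQ" by (rule bij_betw_apply[OF bij])
  have surj: "I3 Q leQ = \<Phi> ` I3 P leP" using bij_betw_imp_surj_on[OF bij] by simp
  have part1: "\<Phi> ` J31 P leP = J31 Q leQ"
  proof (intro equalityI subsetI)
    fix g assume "g \<in> \<Phi> ` J31 P leP"
    then obtain f where f: "f \<in> J31 P leP" "g = \<Phi> f" by blast
    have fI: "f \<in> I3 P leP" using f(1) unfolding J31_def by blast
    have "\<forall>y\<in>Q. g (y,y,y) = 0"
    proof
      fix y assume y: "y \<in> Q"
      have "g (y,y,y) = f (\<psi> y, \<psi> y, \<psi> y)" using psi[rule_format, OF y fI] f(2) by simp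
      also have "\<dots> = 0" using f(1) psiP y unfolding J31_def by blast
      finally show "g (y,y,y) = 0" .
    qed
    thus "g \<in> J31 Q leQ" unfolding J31_def using PhiI[OF fI] f(2) by blast
  next
    fix g :: "'b \<times> 'b \<times> 'b \<Rightarrow> 'r" assume g: "g \<in> J31 Q leQ"
    hence gI: "g \<in> I3 Q leQ" unfolding J31_def by blast
    then obtain f where f: "f \<in> I3 P leP" "g = \<Phi> f" using surj by blast
    have "\<forall>x\<in>P. f (x,x,x) = 0"
    proof
      fix x assume x: "x \<in> P"
      have "f (x,x,x) = f (\<psi> (\<phi> x), \<psi> (\<phi> x), \<psi> (\<phi> x))" using psiphi[OF x] by simp
      also have "\<dots> = \<Phi> f (\<phi> x, \<phi> x, \<phi> x)" using psi[rule_format, OF phiQ[OF x] f(1)] by simp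
      also have "\<dots> = 0" using g f(2) phiQ[OF x] unfolding J31_def by blast
      finally show "f (x,x,x) = 0" .
    qed
    hence "f \<in> J31 P leP" unfolding J31_def using f(1) by blast
    thus "g \<in> \<Phi> ` J31 P leP" using f(2) by blast
  qed
  have part2: "\<forall>x\<in>P. (\<lambda>t. \<Phi> (e1 x) t - e1 (\<phi> x) t) \<in> J31 Q leQ"
  proof
    fix x assume x: "x \<in> P"
    have exI3: "(e1 x :: 'a \<times> 'a \<times> 'a \<Rightarrow> 'r) \<in> I3 P leP"
      unfolding e1_et by (rule et_I3) (simp add: P3le_def x reflP)
    have eyI3: "(e1 (\<phi> x) :: 'b \<times> 'b \<times> 'b \<Rightarrow> 'r) \<in> I3 Q leQ"
      unfolding e1_et by (rule et_I3) (simp add: P3le_def phiQ[OF x] reflQ)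
    have "\<forall>y\<in>Q. \<Phi> (e1 x) (y,y,y) - e1 (\<phi> x) (y,y,y) = 0"
    proof
      fix y assume y: "y \<in> Q"
      have "\<Phi> (e1 x) (y,y,y) = e1 x (\<psi> y, \<psi> y, \<psi> y)" by (rule psi[rule_format, OF y exI3])
      moreover have "\<psi> y = x \<longleftrightarrow> y = \<phi> x" using psiphi[OF x] phipsi[OF y] by auto
      ultimately show "\<Phi> (e1 x) (y,y,y) - e1 (\<phi> x) (y,y,y) = 0"
        by (simp add: e1_et et_def)
    qed
    thus "(\<lambda>t. \<Phi> (e1 x) t - e1 (\<phi> x) t) \<in> J31 Q leQ"
      unfolding J31_def using diff_I3[OF PhiI[OF exI3] eyI3] by simp
  qed
  show ?thesis using part1 part2 bphi by blast
qed

end
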